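(* Let $p,q$ be non-zero coprime integers, and let $1\le k\le |p|-1$, $1\le l\le |q|-1$. Let $z_{ij}\in\mathbb{C}$ ($0\le i\le |q|$, $0\le j\le |p|-1$) be the coordinate of the vertex $v^{|p|,k}_{[i+j+1]}$ of the moving polygon after the $i$-th step of the $(|p|,k;|q|,l)$-trochoid (the $0$-th step being the initial position). Then (i) $z_{i0}=z_{i+1,|p|-1}$ for $0\le i\le |q|-1$; (ii) the rotation about $z_{i0}$ by angle $\theta(|p|,k;|q|,l)$ sends $z_{ij}$ to $z_{i+1,j-1}$ for $0\le i\le|q|-1$, $1\le j\le |p|-1$; (iii) $z_{|q|j}=z_{0j}$ for $0\le j\le|p|-1$; and not all $z_{ij}$ are equal. Consequently, $a_{ij}\mapsto (z_{ij},e^{\theta(|p|,k;|q|,l)\sqrt{-1}})$ is a non-trivial $\mathrm{Rot}(\mathbb{E}^2)$-coloring of the standard diagram $D(p,q)$ of the $(p,q)$-torus knot, with all rotation angles equal to $\theta(|p|,k;|q|,l)$.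
   Context: $\mathrm{Rot}(\mathbb{E}^2)=\mathbb{C}\times\mathrm{U}(1)$ with $(z,e^{\theta\sqrt{-1}})\ast(w,e^{\eta\sqrt{-1}})=((z-w)e^{\eta\sqrt{-1}}+w,e^{\theta\sqrt{-1}})$, i.e. the quandle of rotations of the plane, $(z,e^{\theta\sqrt{-1}})$ being the rotation about $z$ by $\theta$; a coloring of a diagram assigns quandle elements to arcs so that at each crossing (outgoing under arc) $=$ (incoming under arc) $\ast$ (over arc) for the appropriate orientation convention; constant colorings are trivial. Regular polygons: for $m\ge2$ let $v^m_0,\dots,v^m_{m-1}$ be the vertices, in counterclockwise order, of a convex regular $m$-gon in $\mathbb{C}$; for $1\le k\le m-1$ put $v^{m,k}_i=v^m_{[ik]}$, where $[r]\in\{0,\dots,m-1\}$ is the residue of $r$ mod $m$, and let $\Pi(m,k)$ be the (possibly degenerate, star) polygon joining $v^{m,k}_{[i]}$ to $v^{m,k}_{[i+1]}$ for all $i$. For $m,n\ge2$, $1\le k\le m-1$, $1\le l\le n-1$ set $\theta(m,k;n,l)=\bigl(\frac{m-2k}{m}-\frac{n-2l}{n}\bigr)\pi$. The $(m,k;n,l)$-trochoid: take $\Pi(m,k)$ and $\Pi(n,l)$ with equal side lengths, placed so that $v^{m,k}_{[0]}=v^{n,l}_{[0]}$ and $v^{m,k}_{[1]}=v^{n,l}_{[1]}$. Keeping $\Pi(n,l)$ fixed, at the $i$-th step ($i=1,2,\dots$) rotate $\Pi(m,k)$ about its vertex $v^{m,k}_{[i]}$ (which then coincides with $v^{n,l}_{[i]}$,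 indices of $\Pi(n,l)$ taken mod $n$) by angle $\theta(m,k;n,l)$; after this step $v^{m,k}_{[i+1]}$ coincides with $v^{n,l}_{[i+1]}$. Explicitly, with $u_j=v^{n,l}_{[j]}$, $d=u_1-u_0$, $\omega=e^{2\pi k\sqrt{-1}/m}$, $\zeta=e^{2\pi l\sqrt{-1}/n}$, one has $u_{j+1}-u_j=d\zeta^j$, and after the $i$-th step the vertex $v^{m,k}_{[i+j+1]}$ of the moving polygon is at $u_i+d\zeta^i(1+\omega+\dots+\omega^j)$ for $0\le j\le m-1$. The diagram $D(p,q)$: a diagram of the $(p,q)$-torus knot (closed $|p|$-strand braid diagram with $|q|$ blocks) whose arcs are labelled $a_{ij}$, $0\le i\le |q|$, $0\le j\le|p|-1$, with $a_{i0}$ and $a_{i+1,|p|-1}$ denoting the same arc and $a_{|q|j}$, $a_{0j}$ denoting the same arc; in the $i$-th block the arc $a_{i0}$ passes over the strands, and for $1\le j\le|p|-1$ there is a crossing with over arc $a_{i0}$, incoming under arc $a_{ij}$ and outgoing under arc $a_{i+1,j-1}$, whose coloring condition reads $\mathrm{color}(a_{i+1,j-1})=\mathrm{color}(a_{ij})\ast\mathrm{color}(a_{i0})$. *)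

theory Defs
  imports "HOL-Analysis.Analysis"
begin

text \<open>The quandle Rot(E^2): pairs (z, u) with z a point of the plane (complex number)
  and u a unit complex number (element of U(1)); (z,u) is the rotation about z by arg u.\<close>

definition RotE2 :: "(complex \<times> complex) set" where
  "RotE2 = {(z, u). cmod u = 1}"

definition rot_op :: "complex \<times> complex \<Rightarrow> complex \<times> complex \<Rightarrow> complex \<times> complex" where
  "rot_op x y = ((fst x - fst y) * snd y + fst y, snd x)"

definition rotate :: "complex \<Rightarrow> real \<Rightarrow> complex \<Rightarrow> complex" where
  "rotate c t z = (z - c) * cis t + c"

definition reg_vertex :: "complex \<Rightarrow> real \<Rightarrow> real \<Rightarrow> nat \<Rightarrow> nat \<Rightarrow> complex" where
  "reg_vertex c rho alpha m s = c + complex_of_real rho * cis (alpha + 2 * pi * real s / real m)"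

definition star_vertex :: "complex \<Rightarrow> real \<Rightarrow> real \<Rightarrow> nat \<Rightarrow> nat \<Rightarrow> nat \<Rightarrow> complex" where
  "star_vertex c rho alpha m k r = reg_vertex c rho alpha m ((r * k) mod m)"

definition theta :: "nat \<Rightarrow> nat \<Rightarrow> nat \<Rightarrow> nat \<Rightarrow> real" where
  "theta m k n l = ((real m - 2 * real k) / real m - (real n - 2 * real l) / real n) * pi"

text \<open>Position of the vertex v^{m,k}_{[r]} of the moving polygon after the i-th step of the
  trochoid (step 0 = initial position): the moving polygon starts as the star polygon
  Pi(m,k) given by (c, rho, alpha); at step i+1 it is rotated by theta about its vertex
  v^{m,k}_{[i+1]}.\<close>
fun troch_pos :: "complex \<Rightarrow> real \<Rightarrow> real \<Rightarrow> nat \<Rightarrow> nat \<Rightarrow> real \<Rightarrow> nat \<Rightarrow> nat \<Rightarrow> complex" where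
  "troch_pos c rho alpha m k t 0 r = star_vertex c rho alpha m k (r mod m)"
| "troch_pos c rho alpha m k t (Suc i) r =
     rotate (troch_pos c rho alpha m k t i (Suc i mod m)) t (troch_pos c rho alpha m k t i (r mod m))"

text \<open>Colorings of the diagram D(p,q) (|p| strands, |q| blocks): arcs labelled (i,j),
  0 \<le> i \<le> |q|, 0 \<le> j \<le> |p|-1, with identifications a_{i0} = a_{i+1,|p|-1} and
  a_{|q|j} = a_{0j}, and crossing conditions
  col(a_{i+1,j-1}) = col(a_{ij}) * col(a_{i0}).\<close>
definition is_Dpq_coloring :: "int \<Rightarrow> int \<Rightarrow> (nat \<times> nat \<Rightarrow> complex \<times> complex) \<Rightarrow> bool" where
  "is_Dpq_coloring p q col \<longleftrightarrow>
     (let m = nat \<bar>p\<bar>; n = nat \<bar>q\<bar> in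
       (\<forall>i\<le>n. \<forall>j<m. col (i, j) \<in> RotE2) \<and>
       (\<forall>i<n. col (i, 0) = col (i + 1, m - 1)) \<and>
       (\<forall>j<m. col (n, j) = col (0, j)) \<and>
       (\<forall>i<n. \<forall>j. 1 \<le> j \<and> j \<le> m - 1 \<longrightarrow> col (i + 1, j - 1) = rot_op (col (i, j)) (col (i, 0))))"

definition nontrivial_Dpq_coloring :: "int \<Rightarrow> int \<Rightarrow> (nat \<times> nat \<Rightarrow> complex \<times> complex) \<Rightarrow> bool" where
  "nontrivial_Dpq_coloring p q col \<longleftrightarrow>
     is_Dpq_coloring p q col \<and>
     (\<exists>i i' j j'. i \<le> nat \<bar>q\<bar> \<and> i' \<le> nat \<bar>q\<bar> \<and> j < nat \<bar>p\<bar> \<and> j' < nat \<bar>p\<bar> \<and>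
        col (i, j) \<noteq> col (i', j'))"

end

theory Submission
  imports Defs
begin


lemma pow_mod_root:
  fixes e :: complex
  assumes "e ^ m = 1"
  shows "e ^ (r mod m) = e ^ r"
proof -
  have "e ^ r = e ^ (m * (r div m) + r mod m)" by simp
  also have "\<dots> = (e ^ m) ^ (r div m) * e ^ (r mod m)" by (simp only: power_add power_mult)
  finally show ?thesis using assms by simp
qed

lemma root_pow:
  assumes "m > 0"
  shows "cis (2 * pi / real m) ^ m = 1"
proof -
  have "cis (2 * pi / real m) ^ m = cis (real m * (2 * pi / real m))" by (rule Complex.DeMoivre)
  also have "real m * (2 * pi / real m) = 2 * pi" using assms by simp
  finally show ?thesis by simp
qed

lemma star_vertex_eq:
  assumes "m > 0"
  shows "star_vertex c rho alpha m k r = c + complex_of_real rho * cis alpha * cis (2 * pi * real k / real m) ^ r"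
proof -
  let ?e = "cis (2 * pi / real m)"
  have "cis (2 * pi * real (r * k mod m) / real m) = ?e ^ (r * k mod m)"
    by (simp only: Complex.DeMoivre) (simp add: field_simps)
  also have "\<dots> = ?e ^ (r * k)" by (rule pow_mod_root[OF root_pow[OF assms]])
  also have "\<dots> = cis (2 * pi * real k / real m) ^ r"
    by (simp only: Complex.DeMoivre power_mult[symmetric] mult.commute[of r k]) (simp add: field_simps)
  finally have h: "cis (2 * pi * real (r * k mod m) / real m) = cis (2 * pi * real k / real m) ^ r" .
  show ?thesis unfolding star_vertex_def reg_vertex_def
    by (simp add: cis_mult[symmetric] h)
qed

lemma cis_frac_ne1:
  assumes "0 < l" "l < n"
  shows "cis (2 * pi * real l / real n) \<noteq> 1"
proof
  assume "cis (2 * pi * real l / real n) = 1"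
  then have "cos (2 * pi * real l / real n) = 1" by (metis Re_complex_of_real cis.sel(1) one_complex.simps(1))
  then obtain j :: int where j: "2 * pi * real l / real n = real_of_int j * 2 * pi"
    by (auto simp: cos_one_2pi_int)
  then have "(2 * pi) * (real l / real n) = (2 * pi) * real_of_int j"
    by (simp only: times_divide_eq_right mult_ac)
  moreover have ne: "2 * pi \<noteq> (0::real)" by simp
  ultimately have "real l / real n = real_of_int j" using mult_left_cancel[OF ne] by blast
  moreover have "0 < real l / real n" "real l / real n < 1" using assms by auto
  ultimately show False by (metis of_int_0_less_iff of_int_less_1_iff not_one_le_zero zless_imp_add1_zle add_0 linorder_not_le) 
qed


theorem mainTheorem5:
  fixes p q :: int and k l :: nat
    and c1 c2 :: complex and rho1 rho2 alpha beta :: real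
  assumes "p \<noteq> 0" and "q \<noteq> 0" and "coprime p q"
    and "1 \<le> k" and "int k \<le> \<bar>p\<bar> - 1"
    and "1 \<le> l" and "int l \<le> \<bar>q\<bar> - 1"
    and "rho1 > 0" and "rho2 > 0"
    and "star_vertex c1 rho1 alpha (nat \<bar>p\<bar>) k 0 = star_vertex c2 rho2 beta (nat \<bar>q\<bar>) l 0"
    and "star_vertex c1 rho1 alpha (nat \<bar>p\<bar>) k 1 = star_vertex c2 rho2 beta (nat \<bar>q\<bar>) l 1"
  defines "m \<equiv> nat \<bar>p\<bar>" and "n \<equiv> nat \<bar>q\<bar>"
  defines "t \<equiv> theta m k n l"
  defines "z \<equiv> (\<lambda>i j. troch_pos c1 rho1 alpha m k t i ((i + j + 1) mod m))"
  shows "(\<forall>i<n. z i 0 = z (i + 1) (m - 1))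
       \<and> (\<forall>i<n. \<forall>j. 1 \<le> j \<and> j \<le> m - 1 \<longrightarrow> rotate (z i 0) t (z i j) = z (i + 1) (j - 1))
       \<and> (\<forall>j<m. z n j = z 0 j)
       \<and> (\<exists>i i' j j'. i \<le> n \<and> i' \<le> n \<and> j < m \<and> j' < m \<and> z i j \<noteq> z i' j')
       \<and> nontrivial_Dpq_coloring p q (\<lambda>(i, j). (z i j, cis t))"
  proof -
  have m2: "m \<ge> 2" and km: "k < m" using assms(4,5) unfolding m_def by auto
  have n2: "n \<ge> 2" and ln: "l < n" using assms(6,7) unfolding n_def by auto
  define w where "w = cis (2 * pi * real k / real m)"
  define \<zeta> where "\<zeta> = cis (2 * pi * real l / real n)"
  define \<rho> where "\<rho> = cis t"
  define B where "B = complex_of_real rho1 * cis alpha"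
  have wm: "w ^ m = 1"
  proof -
    have "w = cis (2 * pi / real m) ^ k" unfolding w_def
      by (simp only: Complex.DeMoivre) (simp add: field_simps)
    hence "w ^ m = (cis (2 * pi / real m) ^ m) ^ k" by (simp add: power_mult[symmetric] mult.commute)
    thus ?thesis using root_pow[of m] m2 by simp
  qed
  have zn: "\<zeta> ^ n = 1"
  proof -
    have "\<zeta> = cis (2 * pi / real n) ^ l" unfolding \<zeta>_def
      by (simp only: Complex.DeMoivre) (simp add: field_simps)
    hence "\<zeta> ^ n = (cis (2 * pi / real n) ^ n) ^ l" by (simp add: power_mult[symmetric] mult.commute)
    thus ?thesis using root_pow[of n] n2 by simp
  qed
  have z1: "\<zeta> \<noteq> 1" unfolding \<zeta>_def using cis_frac_ne1[of l n] assms(6) ln by simp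
  have w1: "w \<noteq> 1" unfolding w_def using cis_frac_ne1[of k m] assms(4) km by simp
  have w0: "w \<noteq> 0" unfolding w_def by simp
  have B0: "B \<noteq> 0" unfolding B_def using assms(8) by simp
  have rw: "\<rho> * w = \<zeta>"
  proof -
    have "t + 2 * pi * real k / real m = 2 * pi * real l / real n"
      unfolding t_def theta_def using m2 n2 by (simp add: field_simps)
    thus ?thesis unfolding \<rho>_def w_def \<zeta>_def by (simp add: cis_mult)
  qed
  have key: "\<rho> ^ i * w ^ Suc i = \<zeta> ^ i * w" for i
    by (simp add: rw[symmetric] power_mult_distrib)
  have key2: "\<rho> ^ i * w ^ Suc i * \<rho> = \<zeta> ^ Suc i" for i
    by (simp add: rw[symmetric] power_mult_distrib)
  define A where "A i = c1 + B * (w - \<zeta>) * (\<Sum>a<i. \<zeta> ^ a)" for i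
  have wmod: "w ^ (r mod m) = w ^ r" for r by (rule pow_mod_root[OF wm])
  have P: "troch_pos c1 rho1 alpha m k t i r = A i + B * \<rho> ^ i * w ^ r" for i r
  proof (induction i arbitrary: r)
    case 0
    show ?case using m2 by (simp add: star_vertex_eq A_def B_def w_def[symmetric] wmod)
  next
    case (Suc i)
    have "troch_pos c1 rho1 alpha m k t (Suc i) r
        = ((A i + B * \<rho> ^ i * w ^ r) - (A i + B * \<rho> ^ i * w ^ Suc i)) * \<rho> + (A i + B * \<rho> ^ i * w ^ Suc i)"
      by (simp add: Suc.IH rotate_def \<rho>_def[symmetric] wmod)
    also have "\<dots> = A i + B * (\<rho> ^ i * w ^ Suc i) - B * (\<rho> ^ i * w ^ Suc i * \<rho>) + B * \<rho> ^ Suc i * w ^ r"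
      by (simp add: algebra_simps)
    also have "\<dots> = A (Suc i) + B * \<rho> ^ Suc i * w ^ r"
      unfolding key2 key A_def by (simp add: algebra_simps) (intro disjI2, rule rw[symmetric])
    finally show ?case .
  qed
  have sum0: "(\<Sum>a<n. \<zeta> ^ a) = 0"
  proof -
    have "(1 - \<zeta>) * (\<Sum>a<n. \<zeta> ^ a) = 0" using one_diff_power_eq[of \<zeta> n] zn by simp
    thus ?thesis using z1 by simp
  qed
  have zform: "z i j = A i + B * \<rho> ^ i * w ^ (i + j + 1)" for i j
    unfolding z_def P wmod ..
  have part1: "\<forall>i<n. z i 0 = z (i + 1) (m - 1)"
  proof (intro allI impI)
    fix i assume "i < n"
    have "i + 1 + (m - 1) + 1 = Suc i + m" using m2 by simp
    then have e: "(i + 1 + (m - 1) + 1) mod m = Suc i mod m" by (simp only: mod_add_self2)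
    show "z i 0 = z (i + 1) (m - 1)" unfolding z_def e by (simp add: rotate_def)
  qed
  have part2: "\<forall>i<n. \<forall>j. 1 \<le> j \<and> j \<le> m - 1 \<longrightarrow> rotate (z i 0) t (z i j) = z (i + 1) (j - 1)"
  proof (intro allI impI)
    fix i j assume "i < n" "1 \<le> j \<and> j \<le> m - 1"
    then have e: "i + 1 + (j - 1) + 1 = Suc (i + j)" by simp
    show "rotate (z i 0) t (z i j) = z (i + 1) (j - 1)" unfolding z_def e by simp
  qed
  have part3: "\<forall>j<m. z n j = z 0 j"
  proof (intro allI impI)
    fix j
    have "z n j = c1 + B * (\<rho> ^ n * w ^ n) * w ^ (j + 1)"
      unfolding zform A_def sum0 by (simp add: power_add algebra_simps)
    also have "\<rho> ^ n * w ^ n = 1" using zn by (simp only: power_mult_distrib[symmetric] rw)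
    finally show "z n j = z 0 j" unfolding zform A_def by simp
  qed
  have ne: "z 0 0 \<noteq> z 0 1"
  proof
    assume "z 0 0 = z 0 1"
    then have "B * w * (w - 1) = 0" unfolding zform A_def by (simp add: algebra_simps power2_eq_square)
    thus False using B0 w0 w1 by simp
  qed
  have part4: "\<exists>i i' j j'. i \<le> n \<and> i' \<le> n \<and> j < m \<and> j' < m \<and> z i j \<noteq> z i' j'"
    using ne m2 by (intro exI[of _ 0] exI[of _ "0::nat"] exI[of _ "1::nat"]) auto
  have part5: "nontrivial_Dpq_coloring p q (\<lambda>(i, j). (z i j, cis t))"
    unfolding nontrivial_Dpq_coloring_def is_Dpq_coloring_def Let_def m_def[symmetric] n_def[symmetric]
      RotE2_def rot_op_def
    using part1 part2 part3 part4 by (auto simp: rotate_def)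
  show ?thesis using part1 part2 part3 part4 part5 by blast
qed

end
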